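(* Let $p,s\in\mathbb{N}$ be such that $p+1\leq s\leq 2^p$ and $s$ is a multiple of $4$. Then there is a UPB in $(\mathbb{C}^2)^{\otimes p}$ of cardinality $s$, with the possible exception of the case when $p\equiv 1\pmod 4$ and $s=2p+2$.
   Context: A product state in $(\mathbb{C}^2)^{\otimes p}$ is a vector $|v_1\rangle\otimes\cdots\otimes|v_p\rangle$ with each $|v_j\rangle\in\mathbb{C}^2$. A $p$-qubit unextendible product basis (UPB) is a finite set $\mathcal{S}\subseteq(\mathbb{C}^2)^{\otimes p}$ of unit product vectors that are pairwise orthogonal, such that no nonzero product vector outside $\mathcal{S}$ is orthogonal to every element of $\mathcal{S}$. *)

theory Defs
  imports Complex_Main
begin

text \<open>The p-qubit space (C^2)^{\<otimes>p} is modelled as functions from bit strings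
  (bool lists) to complex numbers that vanish off bit strings of length p;
  the coordinate at a bit string xs of length p is the coefficient of the
  computational basis vector |xs_0 ... xs_(p-1)>. A vector of C^2 is a function bool \<Rightarrow> complex.\<close>

definition qubit_strings :: "nat \<Rightarrow> bool list set" where
  "qubit_strings p = {xs. length xs = p}"

definition tensor_prod :: "nat \<Rightarrow> (nat \<Rightarrow> bool \<Rightarrow> complex) \<Rightarrow> (bool list \<Rightarrow> complex)" where
  "tensor_prod p v = (\<lambda>xs. if length xs = p then (\<Prod>j<p. v j (xs ! j)) else 0)"

definition is_product_vector :: "nat \<Rightarrow> (bool list \<Rightarrow> complex) \<Rightarrow> bool" where
  "is_product_vector p x \<longleftrightarrow> (\<exists>v. x = tensor_prod p v)"

definition qinner :: "nat \<Rightarrow> (bool list \<Rightarrow> complex) \<Rightarrow> (bool list \<Rightarrow> complex) \<Rightarrow> complex" where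
  "qinner p x y = (\<Sum>xs\<in>qubit_strings p. cnj (x xs) * y xs)"

definition is_UPB :: "nat \<Rightarrow> (bool list \<Rightarrow> complex) set \<Rightarrow> bool" where
  "is_UPB p S \<longleftrightarrow>
     finite S \<and>
     (\<forall>x\<in>S. is_product_vector p x \<and> qinner p x x = 1) \<and>
     (\<forall>x\<in>S. \<forall>y\<in>S. x \<noteq> y \<longrightarrow> qinner p x y = 0) \<and>
     \<not> (\<exists>z. is_product_vector p z \<and> z \<noteq> (\<lambda>_. 0) \<and> z \<notin> S \<and> (\<forall>x\<in>S. qinner p x z = 0))"

end

theory Submission
  imports Defs
begin

definition linner :: "(bool \<Rightarrow> complex) \<Rightarrow> (bool \<Rightarrow> complex) \<Rightarrow> complex" where
  "linner v w = cnj (v False) * w False + cnj (v True) * w True"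

lemma qubit_strings_0: "qubit_strings 0 = {[]}"
  by (auto simp: qubit_strings_def)

lemma qubit_strings_Suc:
  "qubit_strings (Suc p) = (\<lambda>(b,xs). b # xs) ` (UNIV \<times> qubit_strings p)"
  unfolding qubit_strings_def
  by (auto simp: image_iff length_Suc_conv)

lemma finite_qubit_strings: "finite (qubit_strings p)"
  by (induction p) (auto simp: qubit_strings_0 qubit_strings_Suc)

lemma tensor_prod_Cons:
  "length xs = p \<Longrightarrow> tensor_prod (Suc p) v (b # xs) = v 0 b * tensor_prod p (\<lambda>j. v (Suc j)) xs"
  unfolding tensor_prod_def by (simp del: prod.lessThan_Suc add: prod.lessThan_Suc_shift)

lemma qinner_tensor:
  "qinner p (tensor_prod p v) (tensor_prod p w) = (\<Prod>j<p. linner (v j) (w j))"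
proof (induction p arbitrary: v w)
  case 0
  then show ?case by (simp add: qinner_def qubit_strings_0 tensor_prod_def)
next
  case (Suc p)
  have inj: "inj_on (\<lambda>(b,xs). b # xs) (UNIV \<times> qubit_strings p)"
    by (auto simp: inj_on_def)
  have "qinner (Suc p) (tensor_prod (Suc p) v) (tensor_prod (Suc p) w)
      = (\<Sum>(b,xs)\<in>UNIV \<times> qubit_strings p. cnj (tensor_prod (Suc p) v (b#xs)) * tensor_prod (Suc p) w (b#xs))"
    unfolding qinner_def qubit_strings_Suc
    by (subst sum.reindex[OF inj]) (simp add: case_prod_unfold)
  also have "\<dots> = (\<Sum>(b,xs)\<in>UNIV \<times> qubit_strings p. (cnj (v 0 b) * w 0 b) *
        (cnj (tensor_prod p (\<lambda>j. v (Suc j)) xs) * tensor_prod p (\<lambda>j. w (Suc j)) xs))"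
    by (rule sum.cong) (auto simp: qubit_strings_def tensor_prod_Cons mult_ac)
  also have "\<dots> = (\<Sum>b\<in>UNIV. cnj (v 0 b) * w 0 b) * qinner p (tensor_prod p (\<lambda>j. v (Suc j))) (tensor_prod p (\<lambda>j. w (Suc j)))"
    unfolding qinner_def sum.cartesian_product[symmetric] sum_product by simp
  also have "\<dots> = linner (v 0) (w 0) * (\<Prod>j<p. linner (v (Suc j)) (w (Suc j)))"
    using Suc.IH by (simp add: linner_def UNIV_bool add.commute)
  also have "\<dots> = (\<Prod>j<Suc p. linner (v j) (w j))"
    by (simp del: prod.lessThan_Suc add: prod.lessThan_Suc_shift)
  finally show ?case .
qed

lemma tensor_nonzero:
  assumes "tensor_prod p w \<noteq> (\<lambda>_. 0)" "j < p"
  shows "w j \<noteq> (\<lambda>_. 0)"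
proof
  assume wj: "w j = (\<lambda>_. 0)"
  have "tensor_prod p w xs = 0" for xs
    unfolding tensor_prod_def using assms(2) wj
    by (auto intro!: prod_zero bexI[where x=j])
  with assms(1) show False by auto
qed

type_synonym lab = "nat \<times> bool"

definition flip :: "lab \<Rightarrow> lab" where "flip l = (fst l, \<not> snd l)"

definition good :: "nat \<Rightarrow> lab list set \<Rightarrow> bool" where
  "good p V \<longleftrightarrow> finite V \<and> (\<forall>v\<in>V. length v = p) \<and>
     (\<forall>u\<in>V. \<forall>v\<in>V. u \<noteq> v \<longrightarrow> (\<exists>j<p. u!j = flip (v!j))) \<and>
     (\<forall>L. \<exists>v\<in>V. \<forall>j<p. v!j \<noteq> L j)"

definition phir :: "lab \<Rightarrow> bool \<Rightarrow> real" where
  "phir l b = (if snd l then (if b then 1 else - real (fst l)) else (if b then real (fst l) else 1))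
      / sqrt (1 + (real (fst l))\<^sup>2)"

definition phi :: "lab \<Rightarrow> bool \<Rightarrow> complex" where
  "phi l b = complex_of_real (phir l b)"

lemma sq_pos: "sqrt (1 + (real k)\<^sup>2) > 0"
  by (simp add: add_pos_nonneg)

lemma sq_sq: "sqrt (1 + (real k)\<^sup>2) * sqrt (1 + (real k)\<^sup>2) = 1 + (real k)\<^sup>2"
  by (simp add: add_nonneg_nonneg)

lemma phi_norm: "linner (phi l) (phi l) = 1"
proof -
  obtain k b where l: "l = (k,b)" by (cases l)
  have "phir l False * phir l False + phir l True * phir l True = 1"
    using sq_pos[of k] sq_sq[of k]
    by (cases b) (auto simp: l phir_def field_simps power2_eq_square)
  then have "complex_of_real (phir l False * phir l False + phir l True * phir l True) = 1" by simp
  then show ?thesis by (simp add: linner_def phi_def)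
qed

lemma phi_orth: "linner (phi l) (phi (flip l)) = 0"
proof -
  obtain k b where l: "l = (k,b)" by (cases l)
  have "phir l False * phir (flip l) False + phir l True * phir (flip l) True = 0"
    by (cases b) (auto simp: l flip_def phir_def field_simps)
  then have "complex_of_real (phir l False * phir (flip l) False + phir l True * phir (flip l) True) = 0" by simp
  then show ?thesis by (simp add: linner_def phi_def)
qed

lemma linner_phi_zero:
  "linner (phi (k,b)) w = 0 \<longleftrightarrow>
    (if b then - of_nat k * w False + w True = 0 else w False + of_nat k * w True = 0)"
proof -
  define r where "r = complex_of_real (sqrt (1 + (real k)\<^sup>2))"
  have r: "r \<noteq> 0" using sq_pos[of k] unfolding r_def by (metis less_irrefl of_real_eq_0_iff)
  have "linner (phi (k,b)) w = (if b then - of_nat k * w False + w True else w False + of_nat k * w True) / r"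
    by (cases b) (simp_all add: linner_def phi_def phir_def r_def add_divide_distrib diff_divide_distrib)
  then show ?thesis using r by simp
qed

lemma phi_unique:
  assumes "w \<noteq> (\<lambda>_. 0)" "linner (phi l) w = 0" "linner (phi l') w = 0"
  shows "l = l'"
proof -
  obtain k b where l: "l = (k,b)" by (cases l)
  obtain k' b' where l': "l' = (k',b')" by (cases l')
  have w: "w False \<noteq> 0 \<or> w True \<noteq> 0"
  proof (rule ccontr)
    assume "\<not> ?thesis"
    then have "w = (\<lambda>_. 0)" by (auto intro!: ext) (metis (full_types))
    with assms(1) show False by simp
  qed
  let ?a = "w False" and ?c = "w True"
  have A: "(if b then - of_nat k * ?a + ?c = 0 else ?a + of_nat k * ?c = 0)"
    using assms(2) l linner_phi_zero by simp
  have B: "(if b' then - of_nat k' * ?a + ?c = 0 else ?a + of_nat k' * ?c = 0)"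
    using assms(3) l' linner_phi_zero by simp
  have E1: "b \<Longrightarrow> ?c = of_nat k * ?a" using A by (simp add: add.commute add_eq_0_iff)
  have E2: "\<not> b \<Longrightarrow> ?a = - (of_nat k * ?c)" using A by (simp add: add_eq_0_iff)
  have F1: "b' \<Longrightarrow> ?c = of_nat k' * ?a" using B by (simp add: add.commute add_eq_0_iff)
  have F2: "\<not> b' \<Longrightarrow> ?a = - (of_nat k' * ?c)" using B by (simp add: add_eq_0_iff)
  have nz: "(1 + of_nat x * of_nat y :: complex) \<noteq> 0" for x y :: nat
    by (metis of_nat_1 of_nat_add of_nat_mult of_nat_eq_0_iff add_is_0 one_neq_zero)
  show ?thesis
  proof (cases b; cases b')
    assume bb: "b" "b'"
    then have "?a \<noteq> 0" using E1 w by auto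
    moreover have "of_nat k * ?a = of_nat k' * ?a" using E1 F1 bb by metis
    ultimately have "(of_nat k :: complex) = of_nat k'" by simp
    then show ?thesis using l l' bb by simp
  next
    assume bb: "\<not> b" "\<not> b'"
    then have "?c \<noteq> 0" using E2 w by auto
    moreover have "of_nat k * ?c = of_nat k' * ?c" using E2 F2 bb by (metis minus_equation_iff)
    ultimately have "(of_nat k :: complex) = of_nat k'" by simp
    then show ?thesis using l l' bb by simp
  next
    assume bb: "b" "\<not> b'"
    then have "?a = - (of_nat k' * (of_nat k * ?a))" using E1 F2 by simp
    then have "?a + of_nat k' * (of_nat k * ?a) = 0" by (metis eq_neg_iff_add_eq_0)
    then have "?a * (1 + of_nat k' * of_nat k) = 0" by (simp add: algebra_simps)
    then have "?a = 0" using nz by simp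
    then have False using E1 bb w by simp
    then show ?thesis ..
  next
    assume bb: "\<not> b" "b'"
    then have "?a = - (of_nat k * (of_nat k' * ?a))" using E2 F1 by simp
    then have "?a + of_nat k * (of_nat k' * ?a) = 0" by (metis eq_neg_iff_add_eq_0)
    then have "?a * (1 + of_nat k * of_nat k') = 0" by (simp add: algebra_simps)
    then have "?a = 0" using nz by simp
    then have False using F1 bb w by simp
    then show ?thesis ..
  qed
qed

definition vec :: "nat \<Rightarrow> lab list \<Rightarrow> bool list \<Rightarrow> complex" where
  "vec p v = tensor_prod p (\<lambda>j. phi (v!j))"

lemma flip_flip: "flip (flip l) = l" by (simp add: flip_def)

lemma qinner_vec: "qinner p (vec p u) (vec p v) = (\<Prod>j<p. linner (phi (u!j)) (phi (v!j)))"
  unfolding vec_def by (rule qinner_tensor)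

lemma good_UPB:
  assumes "good p V"
  shows "\<exists>S. is_UPB p S \<and> card S = card V"
proof -
  have fin: "finite V" and len: "\<forall>v\<in>V. length v = p"
    and orth: "\<forall>u\<in>V. \<forall>v\<in>V. u \<noteq> v \<longrightarrow> (\<exists>j<p. u!j = flip (v!j))"
    and unext: "\<forall>L. \<exists>v\<in>V. \<forall>j<p. v!j \<noteq> L j"
    using assms unfolding good_def by auto
  have norm: "qinner p (vec p u) (vec p u) = 1" for u
    by (simp add: qinner_vec phi_norm)
  have zero: "qinner p (vec p u) (vec p v) = 0" if uv: "u \<in> V" "v \<in> V" "u \<noteq> v" for u v
  proof -
    obtain j where j: "j < p" "u!j = flip (v!j)" using orth uv by blast
    then have "v!j = flip (u!j)" by (simp add: flip_flip)
    then have "linner (phi (u!j)) (phi (v!j)) = 0" by (simp add: phi_orth)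
    then show ?thesis unfolding qinner_vec using j(1) by (auto intro!: prod_zero)
  qed
  have inj: "inj_on (vec p) V"
  proof (rule inj_onI, rule ccontr)
    fix u v assume "u \<in> V" "v \<in> V" "vec p u = vec p v" "u \<noteq> v"
    then show False using zero[of u v] norm[of u] by simp
  qed
  define S where "S = vec p ` V"
  have "is_UPB p S"
    unfolding is_UPB_def
  proof (intro conjI ballI impI notI)
    show "finite S" using fin S_def by simp
  next
    fix x assume "x \<in> S"
    then obtain u where "x = vec p u" by (auto simp: S_def)
    then show "is_product_vector p x" "qinner p x x = 1"
      by (auto simp: is_product_vector_def vec_def norm[unfolded vec_def])
  next
    fix x y assume "x \<in> S" "y \<in> S" "x \<noteq> y"
    then obtain u v where "x = vec p u" "y = vec p v" "u \<in> V" "v \<in> V" by (auto simp: S_def)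
    then show "qinner p x y = 0" using zero \<open>x \<noteq> y\<close> by auto
  next
    assume "\<exists>z. is_product_vector p z \<and> z \<noteq> (\<lambda>_. 0) \<and> z \<notin> S \<and> (\<forall>x\<in>S. qinner p x z = 0)"
    then obtain w where nz: "tensor_prod p w \<noteq> (\<lambda>_. 0)"
        and perp: "\<forall>x\<in>S. qinner p x (tensor_prod p w) = 0"
      by (auto simp: is_product_vector_def)
    define L where "L j = (SOME l. linner (phi l) (w j) = 0)" for j
    obtain v where v: "v \<in> V" "\<forall>j<p. v!j \<noteq> L j" using unext by blast
    have "qinner p (vec p v) (tensor_prod p w) = 0" using perp v(1) S_def by auto
    then have "(\<Prod>j<p. linner (phi (v!j)) (w j)) = 0"
      unfolding vec_def qinner_tensor .
    then obtain j where j: "j < p" "linner (phi (v!j)) (w j) = 0" by auto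
    have "linner (phi (L j)) (w j) = 0"
      using someI[of "\<lambda>l. linner (phi l) (w j) = 0" "v!j"] j(2) unfolding L_def by simp
    then have "v!j = L j" using phi_unique[OF tensor_nonzero[OF nz j(1)] j(2)] by simp
    with v(2) j(1) show False by simp
  qed
  moreover have "card S = card V" using inj S_def by (simp add: card_image)
  ultimately show ?thesis by blast
qed

lemma good_compose:
  assumes S: "good q S" and T: "\<forall>x\<in>S. good r (T x)"
  shows "good (q+r) (\<Union>x\<in>S. (\<lambda>y. x @ y) ` T x) \<and>
         card (\<Union>x\<in>S. (\<lambda>y. x @ y) ` T x) = (\<Sum>x\<in>S. card (T x))"
proof -
  have finS: "finite S" and lenS: "\<forall>v\<in>S. length v = q"
    and orthS: "\<forall>u\<in>S. \<forall>v\<in>S. u \<noteq> v \<longrightarrow> (\<exists>j<q. u!j = flip (v!j))"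
    and unextS: "\<forall>L. \<exists>v\<in>S. \<forall>j<q. v!j \<noteq> L j"
    using S unfolding good_def by blast+
  have TT: "good r (T x)" if "x \<in> S" for x using T that by blast
  have finT: "finite (T x)" if "x \<in> S" for x using TT[OF that] unfolding good_def by simp
  have lenT: "\<forall>v\<in>T x. length v = r" if "x \<in> S" for x using TT[OF that] unfolding good_def by simp
  have orthT: "\<forall>u\<in>T x. \<forall>v\<in>T x. u \<noteq> v \<longrightarrow> (\<exists>j<r. u!j = flip (v!j))" if "x \<in> S" for x
    using TT[OF that] unfolding good_def by simp
  have unextT: "\<forall>L. \<exists>v\<in>T x. \<forall>j<r. v!j \<noteq> L j" if "x \<in> S" for x
    using TT[OF that] unfolding good_def by simp
  let ?W = "\<Union>x\<in>S. (\<lambda>y. x @ y) ` T x"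
  have g: "good (q+r) ?W"
    unfolding good_def
  proof (intro conjI ballI impI allI)
    show "finite ?W" using finS finT by auto
  next
    fix v assume "v \<in> ?W" then show "length v = q + r" using lenS lenT by auto
  next
    fix u v assume u: "u \<in> ?W" and v: "v \<in> ?W" and uv: "u \<noteq> v"
    from u obtain x y where x: "x \<in> S" "y \<in> T x" "u = x @ y" by auto
    from v obtain x' y' where x': "x' \<in> S" "y' \<in> T x'" "v = x' @ y'" by auto
    show "\<exists>j<q+r. u!j = flip (v!j)"
    proof (cases "x = x'")
      case True
      then have "y \<noteq> y'" using uv x x' by auto
      then obtain j where "j < r" "y!j = flip (y'!j)" using orthT[OF x(1)] x(2) x'(2) True by blast
      moreover have "length x = q" "length x' = q" using lenS x x' by auto
      ultimately show ?thesis using x x' True by (intro exI[where x="q+j"]) (auto simp: nth_append)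
    next
      case False
      then obtain j where "j < q" "x!j = flip (x'!j)" using orthS x x' by blast
      moreover have "length x = q" "length x' = q" using lenS x x' by auto
      ultimately show ?thesis using x x' by (intro exI[where x=j]) (auto simp: nth_append)
    qed
  next
    fix L :: "nat \<Rightarrow> lab"
    have "\<forall>x\<in>S. \<exists>y. y \<in> T x \<and> (\<forall>j<r. y!j \<noteq> L (q+j))"
    proof
      fix x assume "x \<in> S"
      have "\<exists>y\<in>T x. \<forall>j<r. y!j \<noteq> L (q+j)"
        using spec[OF unextT[OF \<open>x \<in> S\<close>], of "\<lambda>j. L (q+j)"] by simp
      then obtain y where "y \<in> T x" "\<forall>j<r. y!j \<noteq> L (q+j)" by blast
      then show "\<exists>y. y \<in> T x \<and> (\<forall>j<r. y!j \<noteq> L (q+j))" by blast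
    qed
    from bchoice[OF this] obtain Y where Y: "\<forall>x\<in>S. Y x \<in> T x \<and> (\<forall>j<r. Y x!j \<noteq> L (q+j))" by blast
    obtain x where x: "x \<in> S" "\<forall>j<q. x!j \<noteq> L j" using unextS by blast
    have lx: "length x = q" using lenS x by auto
    show "\<exists>v\<in>?W. \<forall>j<q+r. v!j \<noteq> L j"
    proof (intro bexI allI impI)
      fix j assume j: "j < q + r"
      show "(x @ Y x)!j \<noteq> L j"
      proof (cases "j < q")
        case True then show ?thesis using x lx by (simp add: nth_append)
      next
        case False
        then have "(x @ Y x)!j = Y x!(j-q)" using lx by (simp add: nth_append)
        moreover have "j - q < r" using j False by simp
        then have "Y x!(j-q) \<noteq> L (q + (j-q))" using Y x(1) by blast
        ultimately show ?thesis using False by simp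
      qed
    next
      show "x @ Y x \<in> ?W" using Y x by auto
    qed
  qed
  have "card ?W = (\<Sum>x\<in>S. card ((\<lambda>y. x @ y) ` T x))"
  proof (rule card_UN_disjoint)
    show "finite S" by (rule finS)
    show "\<forall>x\<in>S. finite ((\<lambda>y. x @ y) ` T x)" using finT by auto
    show "\<forall>x\<in>S. \<forall>x'\<in>S. x \<noteq> x' \<longrightarrow> (\<lambda>y. x @ y) ` T x \<inter> (\<lambda>y. x' @ y) ` T x' = {}"
      using lenS by (auto simp: append_eq_append_conv)
  qed
  also have "\<dots> = (\<Sum>x\<in>S. card (T x))"
    by (rule sum.cong) (auto simp: card_image inj_on_def)
  finally show ?thesis using g by simp
qed

definition Good :: "nat \<Rightarrow> nat \<Rightarrow> bool" where
  "Good p s \<longleftrightarrow> (\<exists>V. good p V \<and> card V = s)"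

lemma Good_add:
  assumes "Good p a" "Good p b"
  shows "Good (Suc p) (a + b)"
proof -
  obtain A B where A: "good p A" "card A = a" and B: "good p B" "card B = b"
    using assms unfolding Good_def by blast
  define S where "S = {[(0::nat,False)], [(0,True)]}"
  have S: "good 1 S" unfolding good_def
  proof (intro conjI allI)
    fix L :: "nat \<Rightarrow> lab"
    show "\<exists>v\<in>S. \<forall>j<1. v!j \<noteq> L j"
    proof (cases "L 0 = (0,False)")
      case True then show ?thesis by (intro bexI[where x="[(0,True)]"]) (auto simp: S_def)
    next
      case False then show ?thesis by (intro bexI[where x="[(0,False)]"]) (auto simp: S_def)
    qed
  qed (auto simp: S_def flip_def)
  define T where "T x = (if x = [(0::nat,False)] then A else B)" for x :: "lab list"
  have "\<forall>x\<in>S. good p (T x)" using A B by (auto simp: T_def)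
  from good_compose[OF S this] have
    "good (1+p) (\<Union>x\<in>S. (\<lambda>y. x @ y) ` T x)" "card (\<Union>x\<in>S. (\<lambda>y. x @ y) ` T x) = (\<Sum>x\<in>S. card (T x))"
    by auto
  moreover have "(\<Sum>x\<in>S. card (T x)) = a + b" using A B by (simp add: S_def T_def)
  ultimately show ?thesis unfolding Good_def by auto
qed

definition ppi :: "nat \<Rightarrow> nat \<Rightarrow> nat \<Rightarrow> nat" where
  "ppi n r i = (if i = n then r else if i = r then n else nat ((2 * int r - int i) mod int n))"

lemma modkey:
  fixes a b N :: int
  assumes "0 \<le> a" "a < N" "0 \<le> b" "b < N" "N dvd (a - b)"
  shows "a = b"
proof -
  have "a mod N = b mod N" using assms(5) by (simp add: mod_eq_dvd_iff)
  then show ?thesis using assms by simp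
qed

lemma pi_gen:
  assumes n: "odd n" and r: "r < n" and i: "i < n" "i \<noteq> r"
  shows "int (ppi n r i) = (2 * int r - int i) mod int n"
  using n i r by (simp add: ppi_def)

lemma pi_lt:
  assumes "odd n" "r < n" "i < n" "i \<noteq> r"
  shows "ppi n r i < n" "ppi n r i \<noteq> r"
proof -
  have N: "int n > 0" using assms by simp
  have e: "int (ppi n r i) = (2 * int r - int i) mod int n" using pi_gen assms by blast
  then show "ppi n r i < n" using N by (metis of_nat_less_iff pos_mod_bound)
  show "ppi n r i \<noteq> r"
  proof
    assume "ppi n r i = r"
    then have "(2 * int r - int i) mod int n = int r mod int n" using e assms by simp
    then have "int n dvd (2 * int r - int i - int r)" by (simp add: mod_eq_dvd_iff)
    then have "int n dvd (int r - int i)" by (simp add: algebra_simps)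
    then have "int r = int i" using assms by (intro modkey[of _ "int n"]) auto
    then show False using assms by simp
  qed
qed

lemma pi_props:
  assumes n: "odd n" and r: "r < n" and i: "i \<le> n"
  shows "ppi n r i \<le> n" "ppi n r (ppi n r i) = i" "ppi n r i \<noteq> i"
proof -
  have N: "int n > 0" using n by (cases n) auto
  consider "i = n" | "i = r" | "i < n" "i \<noteq> r" using i by linarith
  then have "ppi n r i \<le> n \<and> ppi n r (ppi n r i) = i \<and> ppi n r i \<noteq> i"
  proof cases
    case 1 then show ?thesis using r by (simp add: ppi_def)
  next
    case 2 then show ?thesis using r by (simp add: ppi_def)
  next
    case 3
    define j where "j = ppi n r i"
    have j: "j < n" "j \<noteq> r" using pi_lt[OF n r 3] j_def by auto
    have ej: "int j = (2 * int r - int i) mod int n" using pi_gen[OF n r 3] j_def by simp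
    have "int (ppi n r j) = (2 * int r - int j) mod int n" using pi_gen[OF n r j] .
    also have "\<dots> = (2 * int r - (2 * int r - int i)) mod int n"
      unfolding ej by (simp add: mod_diff_right_eq)
    also have "\<dots> = int i" using 3 by simp
    finally have inv: "ppi n r j = i" by simp
    have ne: "j \<noteq> i"
    proof
      assume "j = i"
      then have "(2 * int r - int i) mod int n = int i mod int n" using ej 3 by simp
      then have "int n dvd (2 * int r - int i - int i)" by (simp add: mod_eq_dvd_iff)
      then have "int n dvd (int r - int i) * 2" by (simp add: algebra_simps)
      moreover have "coprime (int n) 2" using n by (simp add: coprime_right_2_iff_odd)
      ultimately have "int n dvd (int r - int i)" by (metis coprime_dvd_mult_left_iff)
      then have "int r = int i" using 3 r by (intro modkey[of _ "int n"]) auto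
      then show False using 3 by simp
    qed
    show ?thesis using j inv ne j_def by simp
  qed
  then show "ppi n r i \<le> n" "ppi n r (ppi n r i) = i" "ppi n r i \<noteq> i" by auto
qed

lemma pi_ex:
  assumes n: "odd n" and i: "i \<le> n" "i' \<le> n" "i \<noteq> i'"
  shows "\<exists>r<n. ppi n r i = i'"
proof -
  consider "i = n" | "i' = n" | "i < n" "i' < n" using i by linarith
  then show ?thesis
  proof cases
    case 1 then show ?thesis using i by (intro exI[where x=i']) (auto simp: ppi_def)
  next
    case 2 then show ?thesis using i by (intro exI[where x=i]) (auto simp: ppi_def)
  next
    case 3
    have N: "int n > 0" using 3 by simp
    define h where "h = (int n + 1) div 2"
    have h: "2 * h = int n + 1" using n unfolding h_def by (simp add: odd_pos) presburger
    define R where "R = ((int i + int i') * h) mod int n"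
    have R: "0 \<le> R" "R < int n" using N unfolding R_def by auto
    define r where "r = nat R"
    have rR: "int r = R" using R r_def by simp
    have "int n dvd ((int i + int i') * h - R)" unfolding R_def
      by (simp add: mod_eq_dvd_iff[symmetric])
    then have D: "int n dvd 2 * ((int i + int i') * h - R)" by (rule dvd_mult)
    have E: "2 * ((int i + int i') * h - R) = (int i + int i' - 2 * R) + (int i + int i') * int n"
      using h by algebra
    have "int n dvd (int i + int i' - 2 * R) + (int i + int i') * int n" using D unfolding E .
    then have key: "int n dvd (int i + int i' - 2 * R)"
      by (simp only: dvd_add_times_triv_right_iff)
    have rn: "r < n" using R rR by linarith
    have ri: "r \<noteq> i"
    proof
      assume "r = i"
      then have "int n dvd (int i' - int i)" using key rR by (simp add: algebra_simps)
      then have "int i' = int i" using 3 by (intro modkey[of _ "int n"]) auto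
      then show False using i by simp
    qed
    have "int (ppi n r i) = (2 * int r - int i) mod int n" using pi_gen[OF n rn 3(1) ri[symmetric]] .
    also have "\<dots> = int i' mod int n"
    proof -
      have "(2 * int r - int i) - int i' = - (int i + int i' - 2 * R)" using rR by simp
      then have "int n dvd ((2 * int r - int i) - int i')"
        using key by (simp only: dvd_minus_iff)
      then show ?thesis by (simp add: mod_eq_dvd_iff)
    qed
    also have "\<dots> = int i'" using 3 by simp
    finally show ?thesis using rn by (intro exI[where x=r]) simp
  qed
qed

lemma flip_neq: "flip l \<noteq> l" by (cases l) (simp add: flip_def)

lemma good_count:
  fixes \<rho> :: "'d \<Rightarrow> lab list" and c :: "nat \<Rightarrow> nat"
  assumes fin: "finite D" and len: "\<forall>d\<in>D. length (\<rho> d) = p"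
    and orth: "\<forall>d\<in>D. \<forall>d'\<in>D. d \<noteq> d' \<longrightarrow> (\<exists>j<p. \<rho> d!j = flip (\<rho> d'!j))"
    and cls: "\<forall>j<p. \<forall>l. card {d\<in>D. \<rho> d!j = l} \<le> c j"
    and sm: "(\<Sum>j<p. c j) < card D"
  shows "good p (\<rho> ` D) \<and> card (\<rho> ` D) = card D"
proof -
  have inj: "inj_on \<rho> D"
  proof (rule inj_onI, rule ccontr)
    fix d d' assume "d \<in> D" "d' \<in> D" "\<rho> d = \<rho> d'" "d \<noteq> d'"
    then obtain j where "\<rho> d!j = flip (\<rho> d'!j)" using orth by blast
    with \<open>\<rho> d = \<rho> d'\<close> show False using flip_neq by metis
  qed
  have unext: "\<exists>v\<in>\<rho> ` D. \<forall>j<p. v!j \<noteq> L j" for L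
  proof (rule ccontr)
    assume "\<not> ?thesis"
    then have cov: "\<forall>d\<in>D. \<exists>j<p. \<rho> d!j = L j" by auto
    have "D \<subseteq> (\<Union>j\<in>{..<p}. {d\<in>D. \<rho> d!j = L j})" using cov by blast
    then have "card D \<le> card (\<Union>j\<in>{..<p}. {d\<in>D. \<rho> d!j = L j})"
      by (intro card_mono) (use fin in auto)
    also have "\<dots> \<le> (\<Sum>j<p. card {d\<in>D. \<rho> d!j = L j})" by (rule card_UN_le) simp
    also have "\<dots> \<le> (\<Sum>j<p. c j)"
    proof (rule sum_mono)
      fix j assume "j \<in> {..<p}"
      then show "card {d\<in>D. \<rho> d!j = L j} \<le> c j" using cls by blast
    qed
    finally show False using sm by simp
  qed
  have "good p (\<rho> ` D)" unfolding good_def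
  proof (intro conjI ballI impI allI)
    show "finite (\<rho> ` D)" using fin by simp
  next
    fix v assume "v \<in> \<rho> ` D" then show "length v = p" using len by auto
  next
    fix u v assume "u \<in> \<rho> ` D" "v \<in> \<rho> ` D" "u \<noteq> v"
    then obtain d d' where "d \<in> D" "d' \<in> D" "u = \<rho> d" "v = \<rho> d'" "d \<noteq> d'" by auto
    then show "\<exists>j<p. u!j = flip (v!j)" using orth by blast
  next
    fix L show "\<exists>v\<in>\<rho> ` D. \<forall>j<p. v!j \<noteq> L j" by (rule unext)
  qed
  then show ?thesis using inj by (simp add: card_image)
qed

definition lab :: "nat \<Rightarrow> nat \<Rightarrow> nat \<Rightarrow> lab" where
  "lab n r i = (min i (ppi n r i), i < ppi n r i)"

lemma lab_flip:
  assumes "odd n" "r < n" "i \<le> n"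
  shows "lab n r (ppi n r i) = flip (lab n r i)"
proof -
  have "ppi n r (ppi n r i) = i" "ppi n r i \<noteq> i" using pi_props[OF assms] by auto
  then show ?thesis unfolding lab_def flip_def by auto
qed

lemma lab_inj:
  assumes "odd n" "r < n" "i \<le> n" "i' \<le> n" "lab n r i = lab n r i'"
  shows "i = i'"
proof -
  have p1: "ppi n r (ppi n r i) = i" "ppi n r i \<noteq> i" using pi_props[OF assms(1,2,3)] by auto
  have p2: "ppi n r (ppi n r i') = i'" "ppi n r i' \<noteq> i'" using pi_props[OF assms(1,2,4)] by auto
  show ?thesis
  proof (cases "i < ppi n r i")
    case True
    then have "i' < ppi n r i'" using assms(5) by (simp add: lab_def)
    then show ?thesis using True assms(5) by (simp add: lab_def)
  next
    case False
    then have "i' \<ge> ppi n r i'" using assms(5) by (simp add: lab_def)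
    have m: "min i (ppi n r i) = min i' (ppi n r i')" using assms(5) unfolding lab_def by simp
    have "min i (ppi n r i) = ppi n r i" using False by simp
    moreover have "min i' (ppi n r i') = ppi n r i'" using \<open>i' \<ge> ppi n r i'\<close> by simp
    ultimately have "ppi n r i = ppi n r i'" using m by simp
    then show ?thesis using p1 p2 by metis
  qed
qed

definition F :: "nat \<Rightarrow> nat \<Rightarrow> nat \<Rightarrow> nat \<times> bool \<Rightarrow> lab" where
  "F n q j d = (if j = 0 then d
     else if j \<le> q then lab n (j - 1) (fst d)
     else (let t = j - 1 - q; l = lab n (q + t div 2) (fst d) in
       if even t then (2 * fst l + (if snd d then 1 else 0), snd l)
       else (2 * fst l + (if snd d = snd l then 1 else 0), snd l)))"

definition rho :: "nat \<Rightarrow> nat \<Rightarrow> nat \<times> bool \<Rightarrow> lab list" where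
  "rho n q d = map (\<lambda>j. F n q j d) [0..<1 + q + 2 * (n - q)]"

lemma rho_nth: "j < 1 + q + 2 * (n - q) \<Longrightarrow> rho n q d ! j = F n q j d"
  unfolding rho_def by (simp del: upt_Suc)

lemma F_even: "F n q (1 + q + 2 * k) d = (2 * fst (lab n (q + k) (fst d)) + (if snd d then 1 else 0), snd (lab n (q + k) (fst d)))"
  unfolding F_def Let_def by simp

lemma F_odd: "F n q (2 + q + 2 * k) d = (2 * fst (lab n (q + k) (fst d)) + (if snd d = snd (lab n (q + k) (fst d)) then 1 else 0), snd (lab n (q + k) (fst d)))"
proof -
  have a: "2 + q + 2 * k - 1 - q = 2 * k + 1" by simp
  have b: "(2 * k + 1) div 2 = k" by simp
  show ?thesis unfolding F_def Let_def a b by simp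
qed

lemma F_even': "F n q (Suc (q + 2 * k)) d = (2 * fst (lab n (q + k) (fst d)) + (if snd d then 1 else 0), snd (lab n (q + k) (fst d)))"
  using F_even[of n q k d] by simp

lemma F_odd': "F n q (Suc (Suc (q + 2 * k))) d = (2 * fst (lab n (q + k) (fst d)) + (if snd d = snd (lab n (q + k) (fst d)) then 1 else 0), snd (lab n (q + k) (fst d)))"
  using F_odd[of n q k d] by simp

lemma F_mid: "1 \<le> j \<Longrightarrow> j \<le> q \<Longrightarrow> F n q j d = lab n (j - 1) (fst d)"
  unfolding F_def by simp

lemma F_zero: "F n q 0 d = d"
  unfolding F_def by simp

lemma sum_c: "q < p \<Longrightarrow> (\<Sum>j<p. (if 1 \<le> j \<and> j \<le> q then 2 else 1 :: nat)) = p + q"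
proof (induction p)
  case 0 then show ?case by simp
next
  case (Suc p)
  show ?case
  proof (cases "q < p")
    case True then show ?thesis using Suc by simp
  next
    case False
    then have pq: "p = q" using Suc.prems by simp
    have "(\<Sum>j<Suc q. (if 1 \<le> j \<and> j \<le> q then 2 else 1 :: nat)) = 2 * q + 1"
    proof -
      have "\<forall>j<Suc q. (if 1 \<le> j \<and> j \<le> q then 2 else 1 :: nat) = 1 + (if j \<in> {1..q} then 1 else 0)"
        by auto
      then have "(\<Sum>j<Suc q. (if 1 \<le> j \<and> j \<le> q then 2 else 1 :: nat))
          = (\<Sum>j<Suc q. 1 + (if j \<in> {1..q} then 1 else 0))" by (intro sum.cong) auto
      also have "\<dots> = Suc q + (\<Sum>j<Suc q. (if j \<in> {1..q} then 1 else 0))"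
        unfolding sum.distrib by simp
      also have "(\<Sum>j<Suc q. (if j \<in> {1..q} then 1 else 0 :: nat)) = card ({..<Suc q} \<inter> {1..q})"
        by (simp only: card_eq_sum sum.inter_restrict[OF finite_lessThan])
      also have "{..<Suc q} \<inter> {1..q} = {1..q}" by auto
      finally show ?thesis by simp
    qed
    then show ?thesis using pq by simp
  qed
qed

lemma card_two_le: "card {a, b} \<le> 2"
  by (metis card_2_iff card_1_singleton_iff insert_absorb2 le_refl one_le_numeral card_insert_le)

theorem family_good:
  assumes n: "odd n" and q: "q \<le> n"
  shows "Good (1 + q + 2 * (n - q)) (2 * (n + 1))"
proof -
  define p where "p = 1 + q + 2 * (n - q)"
  define D where "D = {..n} \<times> (UNIV :: bool set)"
  define c where "c j = (if 1 \<le> j \<and> j \<le> q then 2 else 1 :: nat)" for j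
  have finD: "finite D" by (simp add: D_def)
  have cardD: "card D = 2 * (n + 1)" by (simp add: D_def card_cartesian_product)
  have len: "\<forall>d\<in>D. length (rho n q d) = p" by (simp add: rho_def p_def)
  have orth: "\<forall>d\<in>D. \<forall>d'\<in>D. d \<noteq> d' \<longrightarrow> (\<exists>j<p. rho n q d!j = flip (rho n q d'!j))"
  proof (intro ballI impI)
    fix d d' assume d: "d \<in> D" and d': "d' \<in> D" and dd: "d \<noteq> d'"
    obtain i e where ie: "d = (i,e)" by (cases d)
    obtain i' e' where ie': "d' = (i',e')" by (cases d')
    have i: "i \<le> n" "i' \<le> n" using d d' ie ie' by (auto simp: D_def)
    show "\<exists>j<p. rho n q d!j = flip (rho n q d'!j)"
    proof (cases "i = i'")
      case True
      then have "e = (\<not> e')" using dd ie ie' by auto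
      then show ?thesis using ie ie' True
        by (intro exI[where x=0]) (simp add: rho_nth p_def F_zero flip_def)
    next
      case False
      obtain r where r: "r < n" "ppi n r i = i'" using pi_ex[OF n i False] by blast
      have lf: "lab n r i' = flip (lab n r i)" using lab_flip[OF n r(1) i(1)] r(2) by simp
      obtain a s where as: "lab n r i = (a, s)" by (cases "lab n r i")
      have as': "lab n r i' = (a, \<not> s)" using lf as by (simp add: flip_def)
      show ?thesis
      proof (cases "r < q")
        case True
        have j: "1 \<le> Suc r" "Suc r \<le> q" "Suc r < p" using True q by (auto simp: p_def)
        show ?thesis using j ie ie' as as'
          by (intro exI[where x="Suc r"]) (simp add: rho_nth p_def F_mid flip_def)
      next
        case False
        define k where "k = r - q"
        have rk: "r = q + k" using False k_def by simp
        have kl: "k < n - q" using r(1) False k_def by simp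
        show ?thesis
        proof (cases "e = e'")
          case True
          have j: "1 + q + 2 * k < p" using kl by (simp add: p_def)
          show ?thesis using j ie ie' as as' True rk
            by (intro exI[where x="1 + q + 2 * k"]) (simp add: rho_nth[of _ q n] p_def F_even F_even' flip_def)
        next
          case ee: False
          have j: "2 + q + 2 * k < p" using kl by (simp add: p_def)
          show ?thesis using j ie ie' as as' ee rk
            by (intro exI[where x="2 + q + 2 * k"]) (auto simp: rho_nth[of _ q n] p_def F_odd F_odd' flip_def)
        qed
      qed
    qed
  qed
  have cls: "\<forall>j<p. \<forall>l. card {d\<in>D. rho n q d!j = l} \<le> c j"
  proof (intro allI impI)
    fix j l assume jp: "j < p"
    let ?A = "{d\<in>D. rho n q d!j = l}"
    have finA: "finite ?A" using finD by simp
    have A: "?A = {d\<in>D. F n q j d = l}" using jp by (simp add: rho_nth p_def)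
    consider "j = 0" | "1 \<le> j" "j \<le> q" | k where "j = 1 + q + 2 * k" "k < n - q"
      | k where "j = 2 + q + 2 * k" "k < n - q"
    proof -
      consider "j = 0" | "1 \<le> j \<and> j \<le> q" | "j > q" by linarith
      then show thesis
      proof cases
        case 3
        define t where "t = j - 1 - q"
        have "j = 1 + q + t" using 3 t_def by simp
        have "t < 2 * (n - q)" using jp 3 t_def by (simp add: p_def)
        show thesis
        proof (cases "even t")
          case True
          then obtain k where "t = 2 * k" by blast
          then show thesis using that(3)[of "t div 2"] \<open>j = 1 + q + t\<close> \<open>t < 2 * (n - q)\<close> by simp
        next
          case False
          then obtain k where "t = 2 * k + 1" using oddE by blast
          then show thesis using that(4)[of k] \<open>j = 1 + q + t\<close> \<open>t < 2 * (n - q)\<close> by simp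
        qed
      qed (use that in auto)
    qed
    then show "card ?A \<le> c j"
    proof cases
      case 1
      have "?A \<subseteq> {l}" using A 1 by (auto simp: F_zero)
      then have "card ?A \<le> card {l}" by (intro card_mono) auto
      then show ?thesis using 1 by (simp add: c_def)
    next
      case 2
      have same: "fst x = fst y" if "x \<in> ?A" "y \<in> ?A" for x y
      proof -
        have "lab n (j - 1) (fst x) = lab n (j - 1) (fst y)" using that A 2 by (simp add: F_mid)
        moreover have "j - 1 < n" using 2 q by simp
        moreover have "fst x \<le> n" "fst y \<le> n" using that by (auto simp: D_def)
        ultimately show ?thesis using lab_inj[OF n] by blast
      qed
      show ?thesis
      proof (cases "?A = {}")
        case True then show ?thesis unfolding True by simp
      next
        case False
        then obtain x where x: "x \<in> ?A" by blast
        have "?A \<subseteq> {(fst x, True), (fst x, False)}"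
        proof
          fix y assume "y \<in> ?A"
          then have "fst y = fst x" using same x by blast
          then show "y \<in> {(fst x, True), (fst x, False)}" by (cases y) auto
        qed
        then have "card ?A \<le> card {(fst x, True), (fst x, False)}" by (intro card_mono) auto
        also have "\<dots> \<le> 2" by (rule card_two_le)
        finally show ?thesis using 2 by (simp add: c_def)
      qed
    next
      case (3 k)
      have "x = y" if "x \<in> ?A" "y \<in> ?A" for x y
      proof -
        obtain i e where x: "x = (i,e)" by (cases x)
        obtain i' e' where y: "y = (i',e')" by (cases y)
        have eq: "F n q j x = F n q j y" using that A by simp
        obtain a s where as: "lab n (q+k) i = (a,s)" by (cases "lab n (q+k) i")
        obtain a' s' where as': "lab n (q+k) i' = (a',s')" by (cases "lab n (q+k) i'")
        have "2 * a + (if e then 1 else 0) = 2 * a' + (if e' then 1 else 0)" "s = s'"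
          using eq 3 x y as as' by (simp_all add: F_even F_even')
        then have "a = a'" "e = e'" by (auto split: if_splits) presburger+
        moreover have "i = i'"
          using lab_inj[OF n, of "q+k" i i'] as as' \<open>s = s'\<close> \<open>a = a'\<close> 3 that x y by (auto simp: D_def)
        ultimately show ?thesis using x y by simp
      qed
      then have "card ?A \<le> Suc 0" using finA by (simp add: card_le_Suc0_iff_eq)
      then show ?thesis using 3 by (simp add: c_def)
    next
      case (4 k)
      have "x = y" if "x \<in> ?A" "y \<in> ?A" for x y
      proof -
        obtain i e where x: "x = (i,e)" by (cases x)
        obtain i' e' where y: "y = (i',e')" by (cases y)
        have eq: "F n q j x = F n q j y" using that A by simp
        obtain a s where as: "lab n (q+k) i = (a,s)" by (cases "lab n (q+k) i")
        obtain a' s' where as': "lab n (q+k) i' = (a',s')" by (cases "lab n (q+k) i'")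
        have P: "(2 * a + (if e = s then 1 else 0), s) = (2 * a' + (if e' = s' then 1 else 0), s')"
          using eq unfolding 4(1) x y F_odd fst_conv snd_conv as as' fst_conv snd_conv .
        then have A2: "2 * a + (if e = s then 1 else 0) = 2 * a' + (if e' = s' then 1 else 0) \<and> s = s'"
          by (rule iffD1[OF prod.inject])
        then have "s = s'" by simp
        have "a = a' \<and> e = e'" using A2 by (cases e; cases e'; cases s; cases s'; simp; presburger)
        then have "a = a'" "e = e'" by simp_all
        moreover have "i = i'"
          using lab_inj[OF n, of "q+k" i i'] as as' \<open>s = s'\<close> \<open>a = a'\<close> 4 that x y by (auto simp: D_def)
        ultimately show ?thesis using x y by simp
      qed
      then have "card ?A \<le> Suc 0" using finA by (simp add: card_le_Suc0_iff_eq)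
      then show ?thesis using 4 by (simp add: c_def)
    qed
  qed
  have sm: "(\<Sum>j<p. c j) < card D"
  proof -
    have "(\<Sum>j<p. c j) = p + q" unfolding c_def by (rule sum_c) (simp add: p_def)
    then show ?thesis using cardD q by (simp add: p_def)
  qed
  from good_count[OF finD len orth cls sm] show ?thesis
    unfolding Good_def p_def[symmetric] cardD[symmetric] by blast
qed

lemma Good_3_4: "Good 3 4"
proof -
  have "Good (1 + 0 + 2 * (1 - 0)) (2 * (1 + 1))" by (rule family_good) auto
  moreover have "(1 + 0 + 2 * (1 - 0)::nat) = 3" "(2 * (1 + 1)::nat) = 4" by simp_all
  ultimately show ?thesis by metis
qed

lemma Good_2_4: "Good 2 4"
proof -
  have "Good (1 + 1 + 2 * (1 - 1)) (2 * (1 + 1))" by (rule family_good) auto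
  moreover have "(1 + 1 + 2 * (1 - 1)::nat) = 2" "(2 * (1 + 1)::nat) = 4" by simp_all
  ultimately show ?thesis by metis
qed

lemma Good_3_8: "Good 3 8"
  using Good_add[OF Good_2_4 Good_2_4] by (simp add: numeral_eq_Suc)

lemma Good_6_20: "Good 6 20"
proof -
  obtain S where S: "good 3 S" "card S = 4" using Good_3_4 unfolding Good_def by blast
  obtain A where A: "good 3 A" "card A = 8" using Good_3_8 unfolding Good_def by blast
  obtain B where B: "good 3 B" "card B = 4" using Good_3_4 unfolding Good_def by blast
  have "S \<noteq> {}" using S by auto
  then obtain x0 where x0: "x0 \<in> S" by blast
  define T where "T x = (if x = x0 then A else B)" for x
  have "\<forall>x\<in>S. good 3 (T x)" using A B by (simp add: T_def)
  from good_compose[OF S(1) this] obtain W where W0: "good (3+3) W" "card W = (\<Sum>x\<in>S. card (T x))"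
    by blast
  have "(3 + 3 :: nat) = 6" by simp
  then have W: "good 6 W" "card W = (\<Sum>x\<in>S. card (T x))" using W0 by simp_all
  have fin: "finite S" using S unfolding good_def by blast
  have "(\<Sum>x\<in>S. card (T x)) = card (T x0) + (\<Sum>x\<in>S - {x0}. card (T x))"
    using fin x0 by (simp add: sum.remove)
  also have "(\<Sum>x\<in>S - {x0}. card (T x)) = (\<Sum>x\<in>S - {x0}. 4)"
    by (rule sum.cong) (auto simp: T_def B)
  also have "\<dots> = 12" using S(2) x0 fin by simp
  finally have "card W = 20" using W A by (simp add: T_def)
  then show ?thesis using W unfolding Good_def by blast
qed

lemma pow_bound: "6 \<le> p \<Longrightarrow> 4 * p + 16 \<le> (2::nat) ^ p"
proof (induction p rule: dec_induct)
  case base then show ?case by simp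
next
  case (step m) then show ?case by simp
qed

definition target :: "nat \<Rightarrow> nat \<Rightarrow> bool" where
  "target p s \<longleftrightarrow> 4 dvd s \<and> p + 1 \<le> s \<and> s \<le> 2 ^ p \<and> \<not> (p mod 4 = 1 \<and> s = 2 * p + 2)"

lemma main: "target p s \<Longrightarrow> Good p s"
proof (induction p arbitrary: s rule: less_induct)
  case (less p)
  have t: "4 dvd s" "p + 1 \<le> s" "s \<le> 2 ^ p" "\<not> (p mod 4 = 1 \<and> s = 2 * p + 2)"
    using less.prems unfolding target_def by auto
  obtain k where k: "s = 4 * k" using t(1) by blast
  show ?case
  proof (cases "s \<le> 2 * p")
    case True
    define n where "n = 2 * k - 1"
    define q where "q = 4 * k - 1 - p"
    have k1: "k \<ge> 1" using t(2) k by simp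
    have "n = 2 * (k - 1) + 1" using k1 n_def by simp
    then have "odd n" by simp
    moreover have "q \<le> n" using True k n_def q_def by simp
    ultimately have "Good (1 + q + 2 * (n - q)) (2 * (n + 1))" by (rule family_good)
    moreover have "1 + q + 2 * (n - q) = p" using True k t(2) k1 n_def q_def by simp
    moreover have "2 * (n + 1) = s" using k k1 n_def by simp
    ultimately show ?thesis by simp
  next
    case False
    have p3: "p \<ge> 3"
    proof (rule ccontr)
      assume "\<not> p \<ge> 3"
      then have "p = 0 \<or> p = 1 \<or> p = 2" by auto
      then show False using t False by auto
    qed
    define P2 where "P2 = (2::nat) ^ (p - 3)"
    have e1: "(2::nat) ^ p = 8 * P2"
    proof -
      have "(2::nat) ^ p = 2 ^ (3 + (p - 3))" using p3 by simp
      then show ?thesis unfolding P2_def by (simp add: power_add)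
    qed
    have e2: "(2::nat) ^ (p - 1) = 4 * P2"
    proof -
      have "(2::nat) ^ p = 2 * 2 ^ (p - 1)" using p3 by (cases p) simp_all
      then show ?thesis using e1 by simp
    qed
    have pb: "4 * p + 16 \<le> 8 * P2" if "6 \<le> p"
      using pow_bound[OF that] e1 by simp
    have ex: "\<exists>a b. a + b = s \<and> target (p - 1) a \<and> target (p - 1) b"
      if "\<not> (p = 6 \<and> s = 20)"
    proof -
      have s8: "s \<le> 8 * P2" using t(3) e1 by simp
      have P2pos: "P2 \<ge> 1" unfolding P2_def by simp
      have q2: "p - 1 + 1 = p" using p3 by simp
      have TI: "target (p - 1) x" if "x = 4 * y" "p \<le> x" "x \<le> 4 * P2" "p mod 4 = 2 \<Longrightarrow> x \<noteq> 2 * p" for x y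
      proof -
        have "(p - 1) mod 4 = 1 \<longleftrightarrow> p mod 4 = 2" using p3 by (cases p) (auto simp: mod_Suc)
        moreover have "2 * (p - 1) + 2 = 2 * p" using p3 by simp
        ultimately show ?thesis using that q2 e2 unfolding target_def by auto
      qed
      have gt: "2 * p < s" using False by simp
      consider (B) "even k" "\<not> (p mod 4 = 2 \<and> s = 4 * p)"
        | (C) "p mod 4 = 2" "s = 4 * p"
        | (D) "odd k" "p mod 4 = 2" "s = 4 * p - 4"
        | (E) "odd k" "p mod 4 = 2" "s = 4 * p + 4"
        | (F) "odd k" "\<not> (p mod 4 = 2 \<and> s = 4 * p - 4)" "\<not> (p mod 4 = 2 \<and> s = 4 * p + 4)"
        by blast
      then show ?thesis
      proof cases
        case B
        obtain v where v: "k = 2 * v" using B(1) by blast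
        have "target (p - 1) (2 * k)"
          by (rule TI[of _ v]) (use v k gt s8 B(2) in auto)
        then show ?thesis using k by (intro exI[where x="2*k"]) simp
      next
        case C
        obtain u where u: "p = 4 * u + 2" using C(1) div_mult_mod_eq[of p 4] by (metis add.commute mult.commute)
        have u1: "u \<ge> 1" using u p3 by simp
        have pb2: "4 * p + 16 \<le> 8 * P2" using u1 u by (intro pb) simp
        have T1: "target (p - 1) (2 * p - 4)"
          by (rule TI[of _ "2 * u"]) (use u u1 pb2 in auto)
        have T2: "target (p - 1) (2 * p + 4)"
          by (rule TI[of _ "2 * u + 2"]) (use u u1 pb2 in auto)
        note T1 T2
        then show ?thesis using C by (intro exI[where x="2*p-4"] exI[where x="2*p+4"]) simp
      next
        case D
        obtain u where u: "p = 4 * u + 2" using D(2) div_mult_mod_eq[of p 4] by (metis add.commute mult.commute)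
        have u2: "u \<ge> 2" using u p3 D(3) that by auto
        have pb2: "4 * p + 16 \<le> 8 * P2" using u2 u by (intro pb) simp
        have T1: "target (p - 1) (2 * p - 8)"
          by (rule TI[of _ "2 * u - 1"]) (use u u2 pb2 in auto)
        have T2: "target (p - 1) (2 * p + 4)"
          by (rule TI[of _ "2 * u + 2"]) (use u u2 pb2 in auto)
        note T1 T2
        then show ?thesis using D u u2 by (intro exI[where x="2*p-8"] exI[where x="2*p+4"]) simp
      next
        case E
        obtain u where u: "p = 4 * u + 2" using E(2) div_mult_mod_eq[of p 4] by (metis add.commute mult.commute)
        have u1: "u \<ge> 1" using u p3 by simp
        have pb2: "4 * p + 16 \<le> 8 * P2" using u1 u by (intro pb) simp
        have T1: "target (p - 1) (2 * p - 4)"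
          by (rule TI[of _ "2 * u"]) (use u u1 pb2 in auto)
        have T2: "target (p - 1) (2 * p + 8)"
          by (rule TI[of _ "2 * u + 3"]) (use u u1 pb2 in auto)
        note T1 T2
        then show ?thesis using E u u1 by (intro exI[where x="2*p-4"] exI[where x="2*p+8"]) simp
      next
        case F
        obtain v where v: "k = 2 * v + 1" using F(1) oddE by blast
        have pa: "p \<le> 4 * v"
        proof (rule ccontr)
          assume "\<not> p \<le> 4 * v"
          then have "p = 4 * v + 1" using gt k v by simp
          then show False using t(4) k v by simp
        qed
        have "v < P2"
        proof (rule ccontr)
          assume "\<not> v < P2"
          then have "8 * P2 \<le> 8 * v" by simp
          then show False using s8 k v by simp
        qed
        then have vb: "4 * v + 4 \<le> 4 * P2" by simp
        have "target (p - 1) (2 * k - 2)"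
          by (rule TI[of _ v]) (use v pa vb F(3) k in auto)
        moreover have "target (p - 1) (2 * k + 2)"
          by (rule TI[of _ "v + 1"]) (use v pa vb F(2) k in auto)
        ultimately show ?thesis using k v by (intro exI[where x="2*k-2"] exI[where x="2*k+2"]) simp
      qed
    qed
    show ?thesis
    proof (cases "p = 6 \<and> s = 20")
      case True then show ?thesis using Good_6_20 by simp
    next
      case nf: False
      then obtain a b where ab: "a + b = s" "target (p - 1) a" "target (p - 1) b" using ex by blast
      have "p - 1 < p" using p3 by simp
      then have "Good (p - 1) a" "Good (p - 1) b" using less.IH ab by auto
      then have "Good (Suc (p - 1)) (a + b)" by (rule Good_add)
      then show ?thesis using ab p3 by simp
    qed
  qed
qed

theorem theorem2:
  fixes p s :: nat
  assumes "p + 1 \<le> s" and "s \<le> 2 ^ p" and "4 dvd s"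
    and "\<not> (p mod 4 = 1 \<and> s = 2 * p + 2)"
  shows "\<exists>S. is_UPB p S \<and> card S = s"
proof -
  have "target p s" using assms unfolding target_def by simp
  then have "Good p s" by (rule main)
  then obtain V where "good p V" "card V = s" unfolding Good_def by blast
  then show ?thesis using good_UPB by metis
qed

end
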